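(* Let $\Bbbk$ be a field of characteristic $0$, let $n\ge 2$, and let $(A,\mu,\alpha)$ be an $n$-ary totally Hom-associative algebra over $\Bbbk$ all of whose $n-1$ twisting maps are equal to a single linear map $\alpha\colon A\to A$. Let $[\cdot,\ldots,\cdot]\colon A^{\otimes n}\to A$ be the $n$-commutator bracket of $\mu$. Then $N(A)=(A,[\cdot,\ldots,\cdot],\alpha)$ (all $n-1$ twisting maps equal to $\alpha$) is an $n$-ary Hom-Nambu algebra. Moreover, if $(A,\mu,\alpha)$ is multiplicative, then so is $N(A)$.
   Context: An $n$-ary Hom-algebra $(V,\mu,(\alpha_1,\ldots,\alpha_{n-1}))$ is a $\Bbbk$-vector space $V$ with an $n$-linear map $\mu\colon V^{\otimes n}\to V$ (written $\mu(a_1,\ldots,a_n)=(a_1\cdots a_n)$) and linear maps $\alpha_1,\ldots,\alpha_{n-1}\colon V\to V$ (twisting maps). It is multiplicative if all twisting maps equal one map $\alpha$ and $\alpha\circ\mu=\mu\circ\alpha^{\otimes n}$. For $i\in\{1,\ldots,n-1\}$ the $i$th Hom-associator is the $(2n-1)$-linear map $as^i(a_1,\ldots,a_{2n-1})=(\alpha_1(a_1),\ldots,\alpha_{i-1}(a_{i-1}),(a_i\cdots a_{i+n-1}),\alpha_i(a_{i+n}),\ldots,\alpha_{n-1}(a_{2n-1}))-(\alpha_1(a_1),\ldots,\alpha_i(a_i),(a_{i+1}\cdots a_{i+n}),\alpha_{i+1}(a_{i+n+1}),\ldots,\alpha_{n-1}(a_{2n-1}))$. The Hom-algebra is $n$-ary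 totally Hom-associative if $as^i=0$ for all $i\in\{1,\ldots,n-1\}$. $n$-commutator words: in non-commuting variables $X_1,X_2,\ldots$, set $W_2=\{X_1X_2,-X_2X_1\}$ and for $n>2$, $W_n=\{zX_n,\,-X_nz : z\in W_{n-1}\}$ (so $|W_n|=2^{n-1}$). A word $w=\pm X_{i_1}\cdots X_{i_n}\in W_n$ acts by $w(a_1,\ldots,a_n)=\pm a_{i_1}\otimes\cdots\otimes a_{i_n}$. The $n$-commutator bracket is $[a_1,\ldots,a_n]=\sum_{w\in W_n}\mu(w(a_1,\ldots,a_n))$ (e.g. for $n=3$: $(a_1a_2a_3)-(a_2a_1a_3)-(a_3a_1a_2)+(a_3a_2a_1)$). For an $n$-ary Hom-algebra $(V,[\cdot,\ldots,\cdot],(\alpha_1,\ldots,\alpha_{n-1}))$, the $n$-ary Hom-Jacobian is $J(x_1,\ldots,x_{n-1};y_1,\ldots,y_n)=[\alpha_1(x_1),\ldots,\alpha_{n-1}(x_{n-1}),[y_1,\ldots,y_n]]-\sum_{i=1}^n[\alpha_1(y_1),\ldots,\alpha_{i-1}(y_{i-1}),[x_1,\ldots,x_{n-1},y_i],\alpha_i(y_{i+1}),\ldots,\alpha_{n-1}(y_n)]$, and $V$ is an $n$-ary Hom-Nambu algebra if $J=0$ identically. *)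

theory Defs
  imports Complex_Main
begin

text \<open>Vectors of arguments are lists (0-indexed). Twisting maps are indexed
  1..n-1 as in the paper: al i for i in {1..n-1}.\<close>

definition n_linear :: "('k::field \<Rightarrow> 'v::ab_group_add \<Rightarrow> 'v) \<Rightarrow> nat \<Rightarrow> ('v list \<Rightarrow> 'v) \<Rightarrow> bool" where
  "n_linear scale n mu \<longleftrightarrow>
     (\<forall>xs. length xs = n \<longrightarrow> (\<forall>i<n. Vector_Spaces.linear scale scale (\<lambda>v. mu (xs[i := v]))))"

definition hom_algebra :: "('k::field \<Rightarrow> 'v::ab_group_add \<Rightarrow> 'v) \<Rightarrow> nat \<Rightarrow> ('v list \<Rightarrow> 'v) \<Rightarrow> (nat \<Rightarrow> 'v \<Rightarrow> 'v) \<Rightarrow> bool" where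
  "hom_algebra scale n mu al \<longleftrightarrow>
     n_linear scale n mu \<and> (\<forall>i\<in>{1..n-1}. Vector_Spaces.linear scale scale (al i))"

definition multiplicative :: "('k::field \<Rightarrow> 'v::ab_group_add \<Rightarrow> 'v) \<Rightarrow> nat \<Rightarrow> ('v list \<Rightarrow> 'v) \<Rightarrow> ('v \<Rightarrow> 'v) \<Rightarrow> bool" where
  "multiplicative scale n mu alpha \<longleftrightarrow>
     hom_algebra scale n mu (\<lambda>_. alpha) \<and>
     (\<forall>xs. length xs = n \<longrightarrow> alpha (mu xs) = mu (map alpha xs))"

text \<open>hom_comp n mu al j xs, for xs of length 2n-1 and 0 <= j <= n-1, is
  (al 1 (a_1), ..., al j (a_j), (a_{j+1} ... a_{j+n}), al (j+1) (a_{j+n+1}), ..., al (n-1) (a_{2n-1})).\<close>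
definition hom_comp :: "nat \<Rightarrow> ('v list \<Rightarrow> 'v) \<Rightarrow> (nat \<Rightarrow> 'v \<Rightarrow> 'v) \<Rightarrow> nat \<Rightarrow> 'v list \<Rightarrow> 'v" where
  "hom_comp n mu al j xs =
     mu (map (\<lambda>k. al (k + 1) (xs ! k)) [0..<j]
         @ [mu (take n (drop j xs))]
         @ map (\<lambda>k. al (j + 1 + k) (xs ! (j + n + k))) [0..<n - 1 - j])"

definition hom_associator :: "nat \<Rightarrow> ('v::ab_group_add list \<Rightarrow> 'v) \<Rightarrow> (nat \<Rightarrow> 'v \<Rightarrow> 'v) \<Rightarrow> nat \<Rightarrow> 'v list \<Rightarrow> 'v" where
  "hom_associator n mu al i xs = hom_comp n mu al (i - 1) xs - hom_comp n mu al i xs"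

definition totally_hom_assoc :: "('k::field \<Rightarrow> 'v::ab_group_add \<Rightarrow> 'v) \<Rightarrow> nat \<Rightarrow> ('v list \<Rightarrow> 'v) \<Rightarrow> (nat \<Rightarrow> 'v \<Rightarrow> 'v) \<Rightarrow> bool" where
  "totally_hom_assoc scale n mu al \<longleftrightarrow>
     hom_algebra scale n mu al \<and>
     (\<forall>i\<in>{1..n-1}. \<forall>xs. length xs = 2 * n - 1 \<longrightarrow> hom_associator n mu al i xs = 0)"

text \<open>n-commutator words: a word is (sign, list of 0-based variable indices);
  sign True means +. words 1 = {X_1}, W_{m+1} = {z X_{m+1}, - X_{m+1} z : z in W_m},
  so words 2 = {X_1 X_2, - X_2 X_1} = W_2.\<close>
fun comm_words :: "nat \<Rightarrow> (bool \<times> nat list) list" where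
  "comm_words 0 = []"
| "comm_words (Suc 0) = [(True, [0])]"
| "comm_words (Suc (Suc m)) =
     concat (map (\<lambda>(s, w). [(s, w @ [Suc m]), (\<not> s, Suc m # w)]) (comm_words (Suc m)))"

definition n_commutator :: "nat \<Rightarrow> ('v::ab_group_add list \<Rightarrow> 'v) \<Rightarrow> 'v list \<Rightarrow> 'v" where
  "n_commutator n mu xs =
     sum_list (map (\<lambda>(s, w). if s then mu (map ((!) xs) w) else - mu (map ((!) xs) w))
                   (comm_words n))"

definition hom_jacobian :: "nat \<Rightarrow> ('v::ab_group_add list \<Rightarrow> 'v) \<Rightarrow> (nat \<Rightarrow> 'v \<Rightarrow> 'v) \<Rightarrow> 'v list \<Rightarrow> 'v list \<Rightarrow> 'v" where
  "hom_jacobian n br al xs ys =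
     br (map (\<lambda>k. al (k + 1) (xs ! k)) [0..<n - 1] @ [br ys])
     - (\<Sum>i=1..n. br (map (\<lambda>k. al (k + 1) (ys ! k)) [0..<i - 1]
                       @ [br (xs @ [ys ! (i - 1)])]
                       @ map (\<lambda>k. al (i + k) (ys ! (i + k))) [0..<n - i]))"

definition hom_nambu :: "('k::field \<Rightarrow> 'v::ab_group_add \<Rightarrow> 'v) \<Rightarrow> nat \<Rightarrow> ('v list \<Rightarrow> 'v) \<Rightarrow> (nat \<Rightarrow> 'v \<Rightarrow> 'v) \<Rightarrow> bool" where
  "hom_nambu scale n br al \<longleftrightarrow>
     hom_algebra scale n br al \<and>
     (\<forall>xs ys. length xs = n - 1 \<longrightarrow> length ys = n \<longrightarrow> hom_jacobian n br al xs ys = 0)"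

end

theory Submission
  imports Defs "HOL-Library.Poly_Mapping"
begin

instantiation list :: (type) monoid_add
begin
definition plus_list_def: "xs + ys = xs @ ys"
definition zero_list_def: "0 = []"
instance by standard (simp_all add: plus_list_def zero_list_def)
end

definition lett :: "'a \<Rightarrow> 'a list \<Rightarrow>\<^sub>0 int" where
  "lett a = Poly_Mapping.single [a] 1"

lemma prod_list_lett: "prod_list (map lett xs) = Poly_Mapping.single xs 1"
proof (induction xs)
  case Nil
  have "Poly_Mapping.single ([]::'a list) (1::int) = 1"
    using single_one[where 'a="'a list" and 'b=int] by (simp add: zero_list_def)
  then show ?case by simp
next
  case (Cons a xs)
  then show ?case by (simp add: lett_def mult_single plus_list_def)
qed

lemma prod_list_lett' [simp]: "prod_list (map (lett \<circ> f) xs) = Poly_Mapping.single (map f xs) 1"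
  by (metis map_map prod_list_lett)

lemma cw_perm: "(s, w) \<in> set (comm_words n) \<Longrightarrow> distinct w \<and> set w = {..<n}"
proof (induction n arbitrary: s w rule: comm_words.induct)
  case 1
  then show ?case by simp
next
  case 2
  then show ?case by auto
next
  case (3 m)
  from "3.prems" obtain s' w' where sw: "(s', w') \<in> set (comm_words (Suc m))"
    and alt: "(s, w) = (s', w' @ [Suc m]) \<or> (s, w) = (\<not> s', Suc m # w')"
    by (simp only: comm_words.simps set_concat set_map) fastforce
  from "3.IH"[OF sw] have d: "distinct w'" "set w' = {..<Suc m}" by auto
  have "Suc m \<notin> set w'" using d by simp
  from alt consider (a) "w = w' @ [Suc m]" | (b) "w = Suc m # w'" by auto
  then show ?case using d \<open>Suc m \<notin> set w'\<close>
    by cases (simp_all add: lessThan_Suc[of "Suc m"])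
qed

lemma cw_len: "(s, w) \<in> set (comm_words n) \<Longrightarrow> length w = n"
  using cw_perm[of s w n] distinct_card[of w] by auto

lemma ncomm_one: "n_commutator (Suc 0) mu [x] = mu [x]"
  by (simp add: n_commutator_def)

lemma ncomm_snoc_aux:
  fixes gs :: "'r::ring_1 list"
  assumes "\<forall>(s, w)\<in>set L. set w \<subseteq> {..<length gs}"
  shows "sum_list (map (\<lambda>(s, w). if s then prod_list (map ((!) (gs @ [h])) w)
                                  else - prod_list (map ((!) (gs @ [h])) w))
           (concat (map (\<lambda>(s, w). [(s, w @ [length gs]), (\<not> s, length gs # w)]) L)))
       = sum_list (map (\<lambda>(s, w). if s then prod_list (map ((!) gs) w) else - prod_list (map ((!) gs) w)) L) * h
         - h * sum_list (map (\<lambda>(s, w). if s then prod_list (map ((!) gs) w) else - prod_list (map ((!) gs) w)) L)"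
  using assms
proof (induction L)
  case Nil
  then show ?case by simp
next
  case (Cons a L)
  obtain s w where a: "a = (s, w)" by (cases a)
  with Cons.prems have sub: "set w \<subseteq> {..<length gs}" by auto
  have m: "map ((!) (gs @ [h])) w = map ((!) gs) w"
    using sub by (auto simp: nth_append)
  from Cons have IH: "sum_list (map (\<lambda>(s, w). if s then prod_list (map ((!) (gs @ [h])) w)
                                  else - prod_list (map ((!) (gs @ [h])) w))
           (concat (map (\<lambda>(s, w). [(s, w @ [length gs]), (\<not> s, length gs # w)]) L)))
       = sum_list (map (\<lambda>(s, w). if s then prod_list (map ((!) gs) w) else - prod_list (map ((!) gs) w)) L) * h
         - h * sum_list (map (\<lambda>(s, w). if s then prod_list (map ((!) gs) w) else - prod_list (map ((!) gs) w)) L)"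
    by auto
  show ?case
    using IH by (cases s) (simp_all add: a m algebra_simps)
qed

lemma ncomm_snoc:
  fixes gs :: "'r::ring_1 list"
  assumes "length gs = Suc m"
  shows "n_commutator (Suc (Suc m)) prod_list (gs @ [h])
         = n_commutator (Suc m) prod_list gs * h - h * n_commutator (Suc m) prod_list gs"
proof -
  have "\<forall>(s, w)\<in>set (comm_words (Suc m)). set w \<subseteq> {..<length gs}"
    using cw_perm assms by auto
  from ncomm_snoc_aux[OF this, of h] show ?thesis
    by (simp add: n_commutator_def assms)
qed

lemma ncomm_deriv:
  fixes hs :: "'r::ring_1 list"
  assumes "length hs = Suc m"
  shows "D * n_commutator (Suc m) prod_list hs - n_commutator (Suc m) prod_list hs * D
    = (\<Sum>i<Suc m. n_commutator (Suc m) prod_list (hs[i := D * hs ! i - hs ! i * D]))"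
  using assms
proof (induction m arbitrary: hs)
  case 0
  then obtain h where "hs = [h]" by (cases hs) auto
  then show ?case by (simp add: ncomm_one)
next
  case (Suc m)
  then have "hs \<noteq> []" by auto
  then obtain gs h where hs: "hs = gs @ [h]" by (metis rev_exhaust)
  with Suc.prems have lg: "length gs = Suc m" by simp
  define A where "A = n_commutator (Suc m) prod_list gs"
  have eqi: "(hs[i := D * hs ! i - hs ! i * D]) = gs[i := D * gs ! i - gs ! i * D] @ [h]"
    if "i < Suc m" for i
    using that lg by (simp add: hs list_update_append1 nth_append)
  have eqlast: "hs[Suc m := D * hs ! Suc m - hs ! Suc m * D] = gs @ [D * h - h * D]"
    using lg by (simp add: hs list_update_append nth_append)
  have "(\<Sum>i<Suc (Suc m). n_commutator (Suc (Suc m)) prod_list (hs[i := D * hs ! i - hs ! i * D]))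
      = (\<Sum>i<Suc m. n_commutator (Suc m) prod_list (gs[i := D * gs ! i - gs ! i * D]) * h
              - h * n_commutator (Suc m) prod_list (gs[i := D * gs ! i - gs ! i * D]))
        + (A * (D * h - h * D) - (D * h - h * D) * A)"
    using lg by (simp add: eqi eqlast ncomm_snoc A_def)
  also have "\<dots> = (D * A - A * D) * h - h * (D * A - A * D) + (A * (D * h - h * D) - (D * h - h * D) * A)"
    unfolding sum_subtractf sum_distrib_left[symmetric] sum_distrib_right[symmetric]
      Suc.IH[OF lg, symmetric] A_def ..
  also have "\<dots> = D * (A * h - h * A) - (A * h - h * A) * D"
    by (simp add: algebra_simps)
  also have "A * h - h * A = n_commutator (Suc (Suc m)) prod_list hs"
    using lg by (simp add: hs ncomm_snoc A_def)
  finally show ?case by simp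
qed


definition evm :: "('k::field \<Rightarrow> 'v::ab_group_add \<Rightarrow> 'v) \<Rightarrow> ('a list \<Rightarrow> 'v) \<Rightarrow> ('a list \<Rightarrow>\<^sub>0 int) \<Rightarrow> 'v" where
  "evm sc \<phi> g = (\<Sum>w\<in>Poly_Mapping.keys g. sc (of_int (Poly_Mapping.lookup g w)) (\<phi> w))"

lemma keys_ncomm:
  assumes "length ys = m"
  shows "Poly_Mapping.keys (n_commutator m prod_list (map lett ys)) \<subseteq> {u. length u = m}"
proof -
  have "Poly_Mapping.keys (sum_list (map (\<lambda>(s, w). if s then prod_list (map ((!) (map lett ys)) w)
            else - prod_list (map ((!) (map lett ys)) w)) L)) \<subseteq> {u. length u = m}"
    if "\<forall>(s, w)\<in>set L. set w \<subseteq> {..<length ys} \<and> length w = m" for L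
    using that
  proof (induction L)
    case Nil
    then show ?case by simp
  next
    case (Cons a L)
    obtain s w where a: "a = (s, w)" by (cases a)
    with Cons.prems have sub: "set w \<subseteq> {..<length ys}" "length w = m" by auto
    have m: "map ((!) (map lett ys)) w = map lett (map ((!) ys) w)"
      using sub by auto
    have k: "Poly_Mapping.keys (if s then prod_list (map ((!) (map lett ys)) w)
            else - prod_list (map ((!) (map lett ys)) w)) \<subseteq> {u. length u = m}"
      using sub by (simp add: m prod_list_lett)
    from Cons have IH: "Poly_Mapping.keys (sum_list (map (\<lambda>(s, w). if s then prod_list (map ((!) (map lett ys)) w)
            else - prod_list (map ((!) (map lett ys)) w)) L)) \<subseteq> {u. length u = m}" by auto
    show ?case using k IH keys_add by (fastforce simp: a)
  qed
  moreover have "\<forall>(s, w)\<in>set (comm_words m). set w \<subseteq> {..<length ys} \<and> length w = m"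
    using cw_perm cw_len assms by fastforce
  ultimately show ?thesis by (simp add: n_commutator_def)
qed

context vector_space
begin

lemma evm_superset:
  "finite K \<Longrightarrow> Poly_Mapping.keys g \<subseteq> K \<Longrightarrow>
    evm scale \<phi> g = (\<Sum>w\<in>K. scale (of_int (Poly_Mapping.lookup g w)) (\<phi> w))"
  unfolding evm_def by (rule sum.mono_neutral_left) (auto simp: in_keys_iff)

lemma evm_zero [simp]: "evm scale \<phi> 0 = 0"
  by (simp add: evm_def)

lemma evm_diff: "evm scale \<phi> (f - g) = evm scale \<phi> f - evm scale \<phi> g"
proof -
  let ?K = "Poly_Mapping.keys f \<union> Poly_Mapping.keys g"
  have k: "Poly_Mapping.keys (f - g) \<subseteq> ?K"
    by (auto simp: in_keys_iff lookup_minus)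
  show ?thesis
    by (simp add: evm_superset[OF _ k] evm_superset[of ?K f] evm_superset[of ?K g]
        lookup_minus scale_left_diff_distrib sum_subtractf)
qed

lemma evm_add: "evm scale \<phi> (f + g) = evm scale \<phi> f + evm scale \<phi> g"
proof -
  let ?K = "Poly_Mapping.keys f \<union> Poly_Mapping.keys g"
  have k: "Poly_Mapping.keys (f + g) \<subseteq> ?K"
    by (rule keys_add)
  show ?thesis
    by (simp add: evm_superset[OF _ k] evm_superset[of ?K f] evm_superset[of ?K g]
        lookup_add scale_left_distrib sum.distrib)
qed

lemma evm_minus: "evm scale \<phi> (- g) = - evm scale \<phi> g"
  using evm_diff[of \<phi> 0 g] by simp

lemma evm_single: "evm scale \<phi> (Poly_Mapping.single w c) = scale (of_int c) (\<phi> w)"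
  by (simp add: evm_def)

lemma evm_sum: "evm scale \<phi> (\<Sum>i\<in>I. f i) = (\<Sum>i\<in>I. evm scale \<phi> (f i))"
  by (induction I rule: infinite_finite_induct) (simp_all add: evm_add)

lemma evm_cong: "(\<And>w. w \<in> Poly_Mapping.keys g \<Longrightarrow> \<phi> w = \<psi> w) \<Longrightarrow> evm scale \<phi> g = evm scale \<psi> g"
  unfolding evm_def by (rule sum.cong) auto

lemma evm_linear:
  assumes "Vector_Spaces.linear scale scale L"
  shows "L (evm scale \<phi> g) = evm scale (\<lambda>w. L (\<phi> w)) g"
proof -
  from assms have add: "\<And>x y. L (x + y) = L x + L y"
    unfolding Vector_Spaces.linear_iff by blast
  from assms have sc: "\<And>c x. L (scale c x) = scale c (L x)"
    unfolding Vector_Spaces.linear_iff by blast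
  interpret a: additive L by standard (rule add)
  show ?thesis unfolding evm_def a.sum sc ..
qed

lemma evm_shift:
  "evm scale \<phi> (Poly_Mapping.single u 1 * g * Poly_Mapping.single v 1) = evm scale (\<lambda>w. \<phi> (u @ w @ v)) g"
proof -
  have "Poly_Mapping.keys g \<subseteq> UNIV" by simp
  then show ?thesis
  proof (induction rule: frag_induction)
    case zero
    then show ?case by simp
  next
    case (one x)
    then show ?case by (simp add: mult_single evm_single plus_list_def)
  next
    case (diff a b)
    then show ?case by (simp add: left_diff_distrib right_diff_distrib evm_diff)
  qed
qed

lemma ncomm_eval:
  assumes "length ys = m"
  shows "n_commutator m \<phi> ys = evm scale \<phi> (n_commutator m prod_list (map lett ys))"
proof -
  have "sum_list (map (\<lambda>(s, w). if s then \<phi> (map ((!) ys) w) else - \<phi> (map ((!) ys) w)) L)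
     = evm scale \<phi> (sum_list (map (\<lambda>(s, w). if s then prod_list (map ((!) (map lett ys)) w)
            else - prod_list (map ((!) (map lett ys)) w)) L))"
    if "\<forall>(s, w)\<in>set L. set w \<subseteq> {..<length ys}" for L
    using that
  proof (induction L)
    case Nil
    then show ?case by simp
  next
    case (Cons a L)
    obtain s w where a: "a = (s, w)" by (cases a)
    with Cons.prems have sub: "set w \<subseteq> {..<length ys}" by auto
    have m: "map ((!) (map lett ys)) w = map lett (map ((!) ys) w)"
      using sub by auto
    from Cons show ?case
      by (simp add: a m prod_list_lett evm_add evm_minus evm_single)
  qed
  moreover have "\<forall>(s, w)\<in>set (comm_words m). set w \<subseteq> {..<length ys}"
    using cw_perm assms by fastforce
  ultimately show ?thesis by (simp add: n_commutator_def)
qed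

end


lemma upd_split:
  "j < length ys \<Longrightarrow> map (\<lambda>k. f (ys ! k)) [0..<j] @ [c] @ map (\<lambda>k. f (ys ! (Suc j + k))) [0..<length ys - Suc j]
     = (map f ys)[j := c]"
  by (rule nth_equalityI) (auto simp: nth_append nth_list_update)

lemma map_nth_prefix:
  "length p \<le> length xs \<Longrightarrow> (\<And>k. k < length p \<Longrightarrow> xs ! k = p ! k) \<Longrightarrow> map (\<lambda>k. f (xs ! k)) [0..<length p] = map f p"
  by (rule nth_equalityI) auto

locale TH =
  fixes scale :: "'k::field \<Rightarrow> 'v::ab_group_add \<Rightarrow> 'v" and n :: nat
    and mu :: "'v list \<Rightarrow> 'v" and alpha :: "'v \<Rightarrow> 'v"
  assumes vs: "vector_space scale" and n2: "n \<ge> 2"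
    and tha: "totally_hom_assoc scale n mu (\<lambda>_. alpha)"
begin

sublocale vector_space scale by (rule vs)

lemma lin_add: "Vector_Spaces.linear scale scale f \<Longrightarrow> Vector_Spaces.linear scale scale g
   \<Longrightarrow> Vector_Spaces.linear scale scale (\<lambda>x. f x + g x)"
  unfolding Vector_Spaces.linear_iff by (simp add: scale_right_distrib algebra_simps)

lemma lin_neg: "Vector_Spaces.linear scale scale f \<Longrightarrow> Vector_Spaces.linear scale scale (\<lambda>x. - f x)"
  unfolding Vector_Spaces.linear_iff by simp

lemma lin_sub: "Vector_Spaces.linear scale scale f \<Longrightarrow> Vector_Spaces.linear scale scale g
   \<Longrightarrow> Vector_Spaces.linear scale scale (\<lambda>x. g x - f x)"
  unfolding Vector_Spaces.linear_iff by (simp add: scale_right_diff_distrib)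

lemma lin_zero: "Vector_Spaces.linear scale scale (\<lambda>x. 0)"
  unfolding Vector_Spaces.linear_iff using vs by simp

lemma mu_lin: "length xs = n \<Longrightarrow> i < n \<Longrightarrow> Vector_Spaces.linear scale scale (\<lambda>v. mu (xs[i := v]))"
  using tha by (auto simp: totally_hom_assoc_def hom_algebra_def n_linear_def)

lemma al_lin: "Vector_Spaces.linear scale scale alpha"
proof -
  have "1 \<in> {1..n-1}" using n2 by auto
  then show ?thesis using tha by (auto simp: totally_hom_assoc_def hom_algebra_def)
qed

abbreviation P :: "'v list \<Rightarrow> 'v" where "P w \<equiv> hom_comp n mu (\<lambda>_. alpha) 0 w"

lemma hc_indep: "length w = 2 * n - 1 \<Longrightarrow> j \<le> n - 1 \<Longrightarrow> hom_comp n mu (\<lambda>_. alpha) j w = P w"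
proof (induction j)
  case 0
  then show ?case by simp
next
  case (Suc j)
  then have "Suc j \<in> {1..n-1}" by auto
  with tha Suc.prems have "hom_associator n mu (\<lambda>_. alpha) (Suc j) w = 0"
    by (auto simp: totally_hom_assoc_def)
  then have "hom_comp n mu (\<lambda>_. alpha) j w = hom_comp n mu (\<lambda>_. alpha) (Suc j) w"
    by (simp add: hom_associator_def)
  with Suc show ?case by simp
qed

lemma hc_eval:
  assumes "length p + length s = n - 1" "length u = n"
  shows "mu (map alpha p @ [mu u] @ map alpha s) = P (p @ u @ s)"
proof -
  have 1: "map (\<lambda>k. alpha ((p @ u @ s) ! k)) [0..<length p] = map alpha p"
    by (rule map_nth_prefix) (auto simp: nth_append)
  have 2: "map (\<lambda>k. alpha ((p @ u @ s) ! (length p + n + k))) [0..<n - 1 - length p] = map alpha s"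
    using assms by (intro nth_equalityI) (auto simp: nth_append)
  have "hom_comp n mu (\<lambda>_. alpha) (length p) (p @ u @ s) = mu (map alpha p @ [mu u] @ map alpha s)"
    unfolding hom_comp_def using assms 1 2 by simp
  moreover have "hom_comp n mu (\<lambda>_. alpha) (length p) (p @ u @ s) = P (p @ u @ s)"
    using assms n2 by (intro hc_indep) auto
  ultimately show ?thesis by simp
qed

lemma word_split:
  assumes "distinct w" "set w = {..<n}" "j < n"
  obtains w1 w2 where "w = w1 @ j # w2" "j \<notin> set w1" "j \<notin> set w2"
    "set w1 \<subseteq> {..<n}" "set w2 \<subseteq> {..<n}" "length w1 + length w2 = n - 1"
proof -
  have "j \<in> set w" using assms by auto
  then obtain w1 w2 where w: "w = w1 @ j # w2" by (meson split_list)
  have len: "length w = n" using distinct_card[OF assms(1)] assms(2) by simp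
  show ?thesis
    by (rule that[OF w]) (use assms w len in auto)
qed

lemma word_transfer:
  assumes "distinct w" "set w = {..<n}" "length as = n" "j < n"
    and kg: "Poly_Mapping.keys g \<subseteq> {u. length u = n}"
  shows "mu (map ((!) ((map alpha as)[j := evm scale mu g])) w)
       = evm scale P (prod_list (map ((!) ((map lett as)[j := g])) w))"
proof -
  obtain w1 w2 where w: "w = w1 @ j # w2" and nj: "j \<notin> set w1" "j \<notin> set w2"
    and b: "set w1 \<subseteq> {..<n}" "set w2 \<subseteq> {..<n}" and l: "length w1 + length w2 = n - 1"
    using word_split[OF assms(1,2,4)] by blast
  define p where "p = map ((!) as) w1"
  define s where "s = map ((!) as) w2"
  have lps: "length p + length s = n - 1" using l by (simp add: p_def s_def)
  have m1: "map ((!) ((map alpha as)[j := c])) w1 = map alpha p" for c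
    unfolding p_def map_map
  proof (rule map_cong[OF refl])
    fix x assume "x \<in> set w1"
    then have "x \<noteq> j" "x < length as" using nj b assms(3) by auto
    then show "(map alpha as)[j := c] ! x = (alpha \<circ> (!) as) x" by simp
  qed
  have m2: "map ((!) ((map alpha as)[j := c])) w2 = map alpha s" for c
    unfolding s_def map_map
  proof (rule map_cong[OF refl])
    fix x assume "x \<in> set w2"
    then have "x \<noteq> j" "x < length as" using nj b assms(3) by auto
    then show "(map alpha as)[j := c] ! x = (alpha \<circ> (!) as) x" by simp
  qed
  have m3: "map ((!) ((map lett as)[j := g])) w1 = map lett p"
    unfolding p_def map_map
  proof (rule map_cong[OF refl])
    fix x assume "x \<in> set w1"
    then have "x \<noteq> j" "x < length as" using nj b assms(3) by auto
    then show "(map lett as)[j := g] ! x = (lett \<circ> (!) as) x" by simp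
  qed
  have m4: "map ((!) ((map lett as)[j := g])) w2 = map lett s"
    unfolding s_def map_map
  proof (rule map_cong[OF refl])
    fix x assume "x \<in> set w2"
    then have "x \<noteq> j" "x < length as" using nj b assms(3) by auto
    then show "(map lett as)[j := g] ! x = (lett \<circ> (!) as) x" by simp
  qed
  define L where "L = (\<lambda>v. mu ((map alpha p @ [0] @ map alpha s)[length p := v]))"
  have Lv: "L v = mu (map alpha p @ [v] @ map alpha s)" for v
    by (simp add: L_def list_update_append)
  have linL: "Vector_Spaces.linear scale scale L"
    unfolding L_def using lps n2 by (intro mu_lin) auto
  have "mu (map ((!) ((map alpha as)[j := evm scale mu g])) w)
      = L (evm scale mu g)"
    using assms(3,4) by (simp add: w m1 m2 Lv)
  also have "\<dots> = evm scale (\<lambda>u. L (mu u)) g" by (rule evm_linear[OF linL])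
  also have "\<dots> = evm scale (\<lambda>u. P (p @ u @ s)) g"
  proof (rule evm_cong)
    fix u assume "u \<in> Poly_Mapping.keys g"
    then have "length u = n" using kg by auto
    then show "L (mu u) = P (p @ u @ s)" using hc_eval[OF lps, of u] by (simp add: Lv)
  qed
  also have "\<dots> = evm scale P (Poly_Mapping.single p 1 * g * Poly_Mapping.single s 1)"
    by (rule evm_shift[symmetric])
  also have "Poly_Mapping.single p 1 * g * Poly_Mapping.single s 1
      = prod_list (map ((!) ((map lett as)[j := g])) w)"
    using assms(3,4) by (simp add: w m3 m4 prod_list_lett mult.assoc)
  finally show ?thesis .
qed

lemma ncomm_transfer:
  assumes "length as = n" "j < n" "Poly_Mapping.keys g \<subseteq> {u. length u = n}"
  shows "n_commutator n mu ((map alpha as)[j := evm scale mu g])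
       = evm scale P (n_commutator n prod_list ((map lett as)[j := g]))"
proof -
  have "sum_list (map (\<lambda>(s, w). if s then mu (map ((!) ((map alpha as)[j := evm scale mu g])) w)
          else - mu (map ((!) ((map alpha as)[j := evm scale mu g])) w)) L)
     = evm scale P (sum_list (map (\<lambda>(s, w). if s then prod_list (map ((!) ((map lett as)[j := g])) w)
          else - prod_list (map ((!) ((map lett as)[j := g])) w)) L))"
    if "\<forall>(s, w)\<in>set L. distinct w \<and> set w = {..<n}" for L
    using that
  proof (induction L)
    case Nil
    then show ?case by simp
  next
    case (Cons a L)
    obtain s w where a: "a = (s, w)" by (cases a)
    with Cons.prems have "distinct w" "set w = {..<n}" by auto
    note wt = word_transfer[OF this assms]
    from Cons show ?case
      by (simp add: a wt evm_add evm_minus)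
  qed
  then show ?thesis unfolding n_commutator_def using cw_perm by fastforce
qed


lemma br_lin:
  assumes "length xs = n" "i < n"
  shows "Vector_Spaces.linear scale scale (\<lambda>v. n_commutator n mu (xs[i := v]))"
proof -
  have "Vector_Spaces.linear scale scale (\<lambda>v. sum_list (map (\<lambda>(s, w). if s then mu (map ((!) (xs[i := v])) w)
          else - mu (map ((!) (xs[i := v])) w)) L))"
    if "\<forall>(s, w)\<in>set L. distinct w \<and> set w = {..<n}" for L
    using that
  proof (induction L)
    case Nil
    then show ?case by (simp add: lin_zero)
  next
    case (Cons a L)
    obtain s w where a: "a = (s, w)" by (cases a)
    with Cons.prems have "distinct w" "set w = {..<n}" by auto
    then obtain w1 w2 where w: "w = w1 @ i # w2" and nj: "i \<notin> set w1" "i \<notin> set w2"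
      and b: "set w1 \<subseteq> {..<n}" "set w2 \<subseteq> {..<n}" and l: "length w1 + length w2 = n - 1"
      using word_split assms(2) by blast
    have eq: "map ((!) (xs[i := v])) w = (map ((!) xs) w)[length w1 := v]" for v
    proof -
      have "map ((!) (xs[i := v])) w1 = map ((!) xs) w1"
      proof (rule map_cong[OF refl])
        fix x assume "x \<in> set w1"
        then have "x \<noteq> i" "x < length xs" using nj b assms by auto
        then show "xs[i := v] ! x = xs ! x" by simp
      qed
      moreover have "map ((!) (xs[i := v])) w2 = map ((!) xs) w2"
      proof (rule map_cong[OF refl])
        fix x assume "x \<in> set w2"
        then have "x \<noteq> i" "x < length xs" using nj b assms by auto
        then show "xs[i := v] ! x = xs ! x" by simp
      qed
      ultimately show ?thesis using assms by (simp add: w list_update_append)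
    qed
    have lw: "Vector_Spaces.linear scale scale (\<lambda>v. mu (map ((!) (xs[i := v])) w))"
      unfolding eq using l assms n2 by (intro mu_lin) (auto simp: w)
    from Cons have IH: "Vector_Spaces.linear scale scale (\<lambda>v. sum_list (map (\<lambda>(s, w). if s then mu (map ((!) (xs[i := v])) w)
          else - mu (map ((!) (xs[i := v])) w)) L))" by auto
    show ?case
      by (cases s) (simp_all add: a lin_add[OF lw IH] lin_sub[OF lw IH])
  qed
  then show ?thesis unfolding n_commutator_def using cw_perm by fastforce
qed

lemma br_mult:
  assumes m: "\<forall>xs. length xs = n \<longrightarrow> alpha (mu xs) = mu (map alpha xs)"
    and l: "length xs = n"
  shows "alpha (n_commutator n mu xs) = n_commutator n mu (map alpha xs)"
proof -
  interpret a: additive alpha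
    by standard (use al_lin in \<open>simp add: Vector_Spaces.linear_iff\<close>)
  have "alpha (sum_list (map (\<lambda>(s, w). if s then mu (map ((!) xs) w) else - mu (map ((!) xs) w)) L))
     = sum_list (map (\<lambda>(s, w). if s then mu (map ((!) (map alpha xs)) w) else - mu (map ((!) (map alpha xs)) w)) L)"
    if "\<forall>(s, w)\<in>set L. set w \<subseteq> {..<n} \<and> length w = n" for L
    using that
  proof (induction L)
    case Nil
    then show ?case by (simp add: a.zero)
  next
    case (Cons a L)
    obtain s w where a: "a = (s, w)" by (cases a)
    with Cons.prems have b: "set w \<subseteq> {..<n}" "length w = n" by auto
    have e1: "map ((!) (map alpha xs)) w = map alpha (map ((!) xs) w)"
      using b l by auto
    have e2: "alpha (mu (map ((!) xs) w)) = mu (map alpha (map ((!) xs) w))"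
      using m b by simp
    from Cons show ?case
      by (cases s) (simp_all add: a a.add a.diff e1 e2 del: map_map)
  qed
  moreover have "\<forall>(s, w)\<in>set (comm_words n). set w \<subseteq> {..<n} \<and> length w = n"
    using cw_perm cw_len by fastforce
  ultimately show ?thesis unfolding n_commutator_def by blast
qed

lemma jac:
  assumes lx: "length xs = n - 1" and ly: "length ys = n"
  shows "hom_jacobian n (n_commutator n mu) (\<lambda>_. alpha) xs ys = 0"
proof -
  obtain m where nm: "n = Suc (Suc m)" using n2 by (metis add_2_eq_Suc le_Suc_ex)
  define D where "D = n_commutator (Suc m) prod_list (map lett xs)"
  define B where "B = n_commutator n prod_list (map lett ys)"
  have lxm: "length (map lett xs) = Suc m" using lx nm by simp
  have kB: "Poly_Mapping.keys B \<subseteq> {u. length u = n}"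
    unfolding B_def using ly by (rule keys_ncomm)
  have T1: "n_commutator n mu (map (\<lambda>k. alpha (xs ! k)) [0..<n - 1] @ [n_commutator n mu ys])
      = evm scale P (D * B - B * D)"
  proof -
    have "map (\<lambda>k. alpha (xs ! k)) [0..<n - 1] @ [n_commutator n mu ys]
        = (map alpha (xs @ [0]))[n - 1 := evm scale mu B]"
    proof -
      have "map (\<lambda>k. alpha (xs ! k)) [0..<n - 1] = map alpha xs"
        using map_nth_prefix[of xs xs alpha] lx by simp
      then show ?thesis using lx by (simp add: B_def ncomm_eval[OF ly] list_update_append)
    qed
    also have "n_commutator n mu \<dots> = evm scale P (n_commutator n prod_list ((map lett (xs @ [0]))[n - 1 := B]))"
      using lx nm kB by (intro ncomm_transfer) auto
    also have "(map lett (xs @ [0]))[n - 1 := B] = map lett xs @ [B]"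
      using lx by (simp add: list_update_append)
    also have "n_commutator n prod_list (map lett xs @ [B]) = D * B - B * D"
      unfolding nm D_def by (rule ncomm_snoc[OF lxm])
    finally show ?thesis .
  qed
  have T2: "n_commutator n mu (map (\<lambda>k. alpha (ys ! k)) [0..<i - 1]
                       @ [n_commutator n mu (xs @ [ys ! (i - 1)])]
                       @ map (\<lambda>k. alpha (ys ! (i + k))) [0..<n - i])
      = evm scale P (n_commutator n prod_list ((map lett ys)[i - 1 :=
           D * (map lett ys ! (i - 1)) - (map lett ys ! (i - 1)) * D]))"
    if i: "i \<in> {1..n}" for i
  proof -
    define y where "y = ys ! (i - 1)"
    have i1: "i - 1 < length ys" and si: "Suc (i - 1) = i" using i ly by auto
    have lxy: "length (xs @ [y]) = n" using lx nm by simp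
    have "map (\<lambda>k. alpha (ys ! k)) [0..<i - 1] @ [n_commutator n mu (xs @ [y])]
                       @ map (\<lambda>k. alpha (ys ! (i + k))) [0..<n - i]
        = (map alpha ys)[i - 1 := evm scale mu (n_commutator n prod_list (map lett (xs @ [y])))]"
      using upd_split[OF i1, of alpha] ly si by (simp add: ncomm_eval[OF lxy])
    also have "n_commutator n mu \<dots> = evm scale P (n_commutator n prod_list
         ((map lett ys)[i - 1 := n_commutator n prod_list (map lett (xs @ [y]))]))"
      using ly i1 keys_ncomm[OF lxy] by (intro ncomm_transfer) auto
    also have "n_commutator n prod_list (map lett (xs @ [y])) = D * lett y - lett y * D"
      unfolding nm D_def using ncomm_snoc[OF lxm] by simp
    finally show ?thesis using i1 by (simp add: y_def)
  qed
  have "hom_jacobian n (n_commutator n mu) (\<lambda>_. alpha) xs ys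
      = evm scale P (D * B - B * D)
        - (\<Sum>i=1..n. evm scale P (n_commutator n prod_list ((map lett ys)[i - 1 :=
           D * (map lett ys ! (i - 1)) - (map lett ys ! (i - 1)) * D])))"
    unfolding hom_jacobian_def T1 by (simp only: sum.cong[OF refl T2])
  also have "(\<Sum>i=1..n. evm scale P (n_commutator n prod_list ((map lett ys)[i - 1 :=
           D * (map lett ys ! (i - 1)) - (map lett ys ! (i - 1)) * D])))
      = evm scale P (\<Sum>i<n. n_commutator n prod_list ((map lett ys)[i :=
           D * (map lett ys ! i) - (map lett ys ! i) * D]))"
    by (simp add: evm_sum sum.atLeast1_atMost_eq)
  also have "(\<Sum>i<n. n_commutator n prod_list ((map lett ys)[i :=
           D * (map lett ys ! i) - (map lett ys ! i) * D])) = D * B - B * D"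
    unfolding B_def nm using ncomm_deriv[of "map lett ys" "Suc m" D] ly nm by simp
  finally show ?thesis by simp
qed

end

theorem theorem4p5:
  fixes scale :: "'k::field_char_0 \<Rightarrow> 'v::ab_group_add \<Rightarrow> 'v"
    and n :: nat and mu :: "'v list \<Rightarrow> 'v" and alpha :: "'v \<Rightarrow> 'v"
  assumes "vector_space scale"
    and "n \<ge> 2"
    and "totally_hom_assoc scale n mu (\<lambda>_. alpha)"
  shows "hom_nambu scale n (n_commutator n mu) (\<lambda>_. alpha)
         \<and> (multiplicative scale n mu alpha \<longrightarrow> multiplicative scale n (n_commutator n mu) alpha)"
proof -
  interpret TH scale n mu alpha
    by (rule TH.intro) (use assms in auto)
  have ha: "hom_algebra scale n (n_commutator n mu) (\<lambda>_. alpha)"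
    unfolding hom_algebra_def n_linear_def using br_lin al_lin by auto
  have hn: "hom_nambu scale n (n_commutator n mu) (\<lambda>_. alpha)"
    unfolding hom_nambu_def using ha jac by auto
  have "multiplicative scale n mu alpha \<longrightarrow> multiplicative scale n (n_commutator n mu) alpha"
    unfolding multiplicative_def using ha br_mult by auto
  with hn show ?thesis by blast
qed

end
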